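(* Let $m\ge1$. Then: (1) for every $h\in[0,2]$ the infimum defining $\delta_m(h)$ is attained, i.e. there is $P\in\mathfrak{P}_m(\Gamma)$ (equivalently a point $\phi^*\in\mathbb{R}^m$) with $\mathrm{mes}\{t\in\mathbb{T}:|P(e^{it})|\ge h\}=\delta_m(h)$; (2) $\delta_m(0)=2\pi$ and $\delta_m(2)=0$; (3) $\delta_m$ is strictly decreasing on $[0,2]$.
   Context: $\Gamma=\{e^{it}:t\in[0,2\pi]\}$ is the unit circle. $\mathfrak{P}_m(\Gamma)$ is the set of algebraic polynomials $P(z)=\prod_{j=1}^m(z-e^{i\phi_j})$, $\phi=(\phi_1,\dots,\phi_m)\in\mathbb{R}^m$, i.e. monic polynomials of degree $m$ all of whose zeros lie on $\Gamma$. $\mathbb{T}=[0,2\pi)$ with endpoints identified, with Lebesgue measure $\mathrm{mes}$. For $0\le h\le 2$, $\delta_m(h)=\inf\{\mathrm{mes}\{t\in\mathbb{T}:|P(e^{it})|\ge h\}:P\in\mathfrak{P}_m(\Gamma)\}$. Equivalently, with $g_m(t;\phi)=\prod_{j=1}^m 2\sin\frac{t-\phi_j}{2}$ (so $|g_m(t;\phi)|=|P(e^{it})|$), $\delta_m(h)=\inf_{\phi\in\mathbb{R}^m}\mathrm{mes}\{t\in[0,2\pi]:|g_m(t;\phi)|\ge h\}$. *)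

theory Defs
  imports "HOL-Analysis.Analysis"
begin

definition circP :: "real list \<Rightarrow> complex \<Rightarrow> complex" where
  "circP \<phi> z = (\<Prod>x\<leftarrow>\<phi>. z - cis x)"

definition levelmes :: "real list \<Rightarrow> real \<Rightarrow> real" where
  "levelmes \<phi> h = measure lborel {t \<in> {0..<2*pi}. h \<le> cmod (circP \<phi> (cis t))}"

definition delta :: "nat \<Rightarrow> real \<Rightarrow> real" where
  "delta m h = Inf {levelmes \<phi> h | \<phi>. length \<phi> = m}"

end

theory Submission
  imports Defs
begin



lemma circP_Nil[simp]: "circP [] z = 1" by (simp add: circP_def)
lemma circP_Cons[simp]: "circP (a#p) z = (z - cis a) * circP p z" by (simp add: circP_def)

lemma circP_cont: "continuous_on UNIV (\<lambda>t. circP p (cis t))"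
  by (induction p) (auto intro!: continuous_intros simp: cis_conv_exp)

lemma circP_bound: "cmod z \<le> 1 \<Longrightarrow> cmod (circP p z) \<le> 2 ^ length p"
proof (induction p)
  case Nil then show ?case by simp
next
  case (Cons a p)
  have "cmod (z - cis a) \<le> 2" using Cons.prems norm_triangle_ineq4[of z "cis a"] by simp
  then show ?case using Cons by (simp add: norm_mult mult_mono)
qed

lemma circP_lip:
  assumes "cmod z \<le> 1"
  shows "length q = length p \<Longrightarrow> cmod (circP q z - circP p z)
     \<le> 2 ^ length p * (\<Sum>i<length p. cmod (cis (q!i) - cis (p!i)))"
proof (induction p arbitrary: q)
  case Nil then show ?case by simp
next
  case (Cons a p)
  then obtain b q' where q: "q = b # q'" "length q' = length p" by (cases q) auto
  have e: "circP q z - circP (a#p) z = (z - cis b) * (circP q' z - circP p z) + (cis a - cis b) * circP p z"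
    using q by (simp add: algebra_simps)
  have n1: "cmod (z - cis b) \<le> 2" using assms norm_triangle_ineq4[of z "cis b"] by simp
  have n2: "cmod (circP p z) \<le> 2 ^ length p" using circP_bound assms by blast
  define S where "S = (\<Sum>i<length p. cmod (cis (q'!i) - cis (p!i)))"
  have S0: "S \<ge> 0" unfolding S_def by (auto intro: sum_nonneg)
  have "cmod (circP q z - circP (a#p) z) \<le> cmod (z - cis b) * cmod (circP q' z - circP p z) + cmod (cis a - cis b) * cmod (circP p z)"
    unfolding e by (metis norm_mult norm_triangle_ineq)
  also have "\<dots> \<le> 2 * (2 ^ length p * S) + cmod (cis b - cis a) * 2 ^ length p"
    apply (rule add_mono)
    apply (rule mult_mono) using n1 Cons.IH[OF q(2)] S_def apply auto[4]
    apply (rule mult_mono) using n2 by (auto simp: norm_minus_commute)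
  also have "\<dots> \<le> 2 ^ length (a#p) * (\<Sum>i<length (a#p). cmod (cis (q!i) - cis ((a#p)!i)))"
  proof -
    have "(\<Sum>i<length (a#p). cmod (cis (q!i) - cis ((a#p)!i))) = cmod (cis b - cis a) + S"
      using q unfolding S_def by (simp add: sum.lessThan_Suc_shift del: sum.lessThan_Suc)
    then show ?thesis using S0 by (simp add: algebra_simps)
  qed
  finally show ?case .
qed



definition Pp :: "real list \<Rightarrow> complex poly" where
  "Pp p = prod_list (map (\<lambda>x. [:-cis x, 1:]) p)"
definition Rp :: "real list \<Rightarrow> complex poly" where
  "Rp p = prod_list (map (\<lambda>x. [:1, -cnj (cis x):]) p)"

lemma poly_Pp: "poly (Pp p) z = circP p z"
  by (induction p) (auto simp: Pp_def algebra_simps)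

lemma degree_Pp: "degree (Pp p) \<le> length p"
proof (induction p)
  case Nil then show ?case by (simp add: Pp_def)
next
  case (Cons a p)
  have e: "Pp (a#p) = [:-cis a, 1:] * Pp p" by (simp add: Pp_def)
  have "degree (Pp (a#p)) \<le> degree [:-cis a, 1:] + degree (Pp p)"
    unfolding e by (rule degree_mult_le)
  then show ?case using Cons by simp
qed

lemma coeff_Pp: "coeff (Pp p) (length p) = 1"
proof (induction p)
  case Nil then show ?case by (simp add: Pp_def)
next
  case (Cons a p)
  have e: "Pp (a#p) = smult (-cis a) (Pp p) + pCons 0 (Pp p)"
    by (simp add: Pp_def)
  have "coeff (Pp p) (Suc (length p)) = 0" using degree_Pp[of p] by (intro coeff_eq_0) auto
  then show ?case using Cons by (simp add: e)
qed

lemma circP_0: "cmod (circP p 0) = 1"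
  by (induction p) (auto simp: norm_mult)

lemma poly_Rp: "cmod z = 1 \<Longrightarrow> poly (Rp p) z = z ^ length p * cnj (circP p z)"
proof (induction p)
  case Nil then show ?case by (simp add: Rp_def)
next
  case (Cons a p)
  have zz: "z * cnj z = 1" using complex_norm_square[of z] Cons.prems by simp
  have "poly (Rp (a#p)) z = (1 - cnj (cis a) * z) * poly (Rp p) z" by (simp add: Rp_def algebra_simps)
  also have "\<dots> = (z * cnj z - cnj (cis a) * z) * (z ^ length p * cnj (circP p z))"
    using Cons zz by simp
  also have "\<dots> = z ^ length (a#p) * cnj (circP (a#p) z)" by (simp add: algebra_simps)
  finally show ?case .
qed

lemma level_finite:
  assumes "length p \<ge> 1"
  shows "finite {t\<in>{0..<2*pi}. cmod (circP p (cis t)) = h}"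
proof -
  define m where "m = length p"
  define Q where "Q = Pp p * Rp p - monom (complex_of_real (h^2)) m"
  have "(0::complex) ^ m = 0" using assms m_def by (simp add: Suc_le_eq)
  then have "poly Q 0 = circP p 0 * poly (Rp p) 0"
    by (simp add: Q_def poly_Pp poly_monom m_def)
  also have "poly (Rp p) 0 = 1" by (induction p) (auto simp: Rp_def)
  finally have "poly Q 0 \<noteq> 0" using circP_0[of p] by auto
  then have Q0: "Q \<noteq> 0" by auto
  have fin: "finite {z. poly Q z = 0}" by (rule poly_roots_finite[OF Q0])
  have inj: "inj_on cis {0..<2*pi}"
  proof (rule inj_onI)
    fix s t assume st: "s \<in> {0..<2*pi}" "t \<in> {0..<2*pi}" "cis s = cis t"
    then have "cis (s - t) = 1" by (simp add: cis_divide[symmetric])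
    then have "cos (s - t) = 1" by (simp add: complex_eq_iff)
    then obtain n :: int where n: "s - t = n * 2 * pi" by (auto simp: cos_one_2pi_int)
    have "\<bar>real_of_int n\<bar> * (2*pi) = \<bar>s - t\<bar>" using n by (simp add: abs_mult)
    also have "\<dots> < 1 * (2*pi)" using st by auto
    finally have "\<bar>real_of_int n\<bar> * (2*pi) < 1 * (2 * pi)" .
    then have "\<bar>real_of_int n\<bar> < 1" by simp
    then have "n = 0" by linarith
    then show "s = t" using n by simp
  qed
  have "cis ` {t\<in>{0..<2*pi}. cmod (circP p (cis t)) = h} \<subseteq> {z. poly Q z = 0}"
  proof clarify
    fix t :: real assume h: "h = cmod (circP p (cis t))"
    have c1: "cmod (cis t) = 1" by simp
    have "poly Q (cis t) = circP p (cis t) * (cis t ^ m * cnj (circP p (cis t))) - complex_of_real (h^2) * cis t ^ m"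
      by (simp add: Q_def poly_Pp poly_Rp[OF c1] poly_monom m_def)
    also have "\<dots> = cis t ^ m * (circP p (cis t) * cnj (circP p (cis t)) - complex_of_real (h^2))"
      by (simp add: algebra_simps)
    also have "\<dots> = 0" using h complex_norm_square[of "circP p (cis t)"] by simp
    finally show "poly Q (cis t) = 0" .
  qed
  then have "finite (cis ` {t\<in>{0..<2*pi}. cmod (circP p (cis t)) = h})"
    using fin finite_subset by blast
  then show ?thesis using inj by (rule finite_imageD[OF _ inj_on_subset]) auto
qed




lemma poly_upto:
  fixes q :: "complex poly"
  assumes "degree q \<le> m"
  shows "poly q x = (\<Sum>i\<le>m. coeff q i * x ^ i)"
proof -
  have "poly q x = (\<Sum>i\<le>degree q. coeff q i * x ^ i)" by (rule poly_altdef)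
  also have "\<dots> = (\<Sum>i\<le>m. coeff q i * x ^ i)"
    by (rule sum.mono_neutral_left) (use assms le_degree in auto)
  finally show ?thesis .
qed

lemma omega_ne1:
  fixes m :: nat
  assumes "0 < i" "i < m"
  shows "cis (2 * pi / m) ^ i \<noteq> 1"
proof
  assume a: "cis (2 * pi / m) ^ i = 1"
  have inj: "inj_on (\<lambda>k. cis (2 * pi * real k / real m)) {..<m}"
    using Complex.bij_betw_roots_unity[of m] assms by (auto simp: bij_betw_def)
  have "real i * (2*pi/real m) = 2*pi*real i/real m" by simp
  have "cis (2 * pi / m) ^ i = cis (real i * (2*pi/real m))" by (rule Complex.DeMoivre)
  also have "\<dots> = cis (2*pi*real i/real m)" by (simp add: mult.commute)
  finally have "(\<lambda>k. cis (2 * pi * real k / real m)) i = (\<lambda>k. cis (2 * pi * real k / real m)) 0"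
    using a by simp
  then have "i = 0" using assms by (intro inj_onD[OF inj]) auto
  then show False using assms by simp
qed

lemma omega_pow_m:
  fixes m :: nat
  assumes "m > 0"
  shows "cis (2 * pi / m) ^ m = 1"
proof -
  have e: "real m * (2*pi/real m) = 2*pi" using assms by simp
  have "cis (2 * pi / m) ^ m = cis (real m * (2*pi/real m))" by (rule Complex.DeMoivre)
  also have "\<dots> = cis (2*pi)" by (simp only: e)
  also have "\<dots> = 1" by (simp add: complex_eq_iff)
  finally show ?thesis .
qed

lemma sum_omega:
  fixes m :: nat
  assumes "m > 0" "i \<le> m"
  shows "(\<Sum>k<m. (cis (2 * pi / m) ^ i) ^ k) = (if i = 0 \<or> i = m then of_nat m else 0)"
proof (cases "i = 0 \<or> i = m")
  case True
  then show ?thesis using omega_pow_m[OF assms(1)] by auto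
next
  case False
  then have ne: "cis (2 * pi / m) ^ i \<noteq> 1" using omega_ne1 assms by auto
  have "((cis (2 * pi / m) ^ i) ^ m) = 1"
    using omega_pow_m[OF assms(1)] by (metis power_mult power_mult_distrib power_one mult.commute)
  then show ?thesis using False ne by (subst geometric_sum) auto
qed

lemma visser_sum:
  fixes m :: nat
  assumes "m > 0" "degree q \<le> m"
  shows "(\<Sum>k<m. poly q (cis (2 * pi / m) ^ k * z)) = of_nat m * (coeff q 0 + coeff q m * z ^ m)"
proof -
  define w where "w = cis (2 * pi / m)"
  have "(\<Sum>k<m. poly q (w ^ k * z)) = (\<Sum>k<m. \<Sum>i\<le>m. coeff q i * (w ^ k * z) ^ i)"
    using poly_upto[OF assms(2)] by simp
  also have "\<dots> = (\<Sum>i\<le>m. coeff q i * z ^ i * (\<Sum>k<m. (w ^ i) ^ k))"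
    by (subst sum.swap) (simp add: sum_distrib_left power_mult_distrib power_mult[symmetric] mult.commute mult.left_commute)
  also have "\<dots> = (\<Sum>i\<le>m. (if i = 0 \<or> i = m then coeff q i * z ^ i * of_nat m else 0))"
    unfolding w_def by (intro sum.cong refl) (use sum_omega[OF assms(1)] in auto)
  also have "\<dots> = (\<Sum>i\<in>{0,m}. coeff q i * z ^ i * of_nat m)"
    by (rule sum.mono_neutral_cong_right) auto
  also have "\<dots> = of_nat m * (coeff q 0 + coeff q m * z ^ m)"
    using assms(1) by (simp add: algebra_simps)
  finally show ?thesis unfolding w_def .
qed

lemma visser:
  assumes "length p \<ge> 1"
  shows "\<exists>t. 2 \<le> cmod (circP p (cis t))"
proof (rule ccontr)
  assume "\<not> ?thesis"
  then have lt: "\<And>t. cmod (circP p (cis t)) < 2" by (simp add: not_le)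
  define m where "m = length p"
  have m0: "m > 0" using assms m_def by (simp add: Suc_le_eq)
  define c where "c = coeff (Pp p) 0"
  have c1: "cmod c = 1" unfolding c_def using circP_0[of p] by (simp add: poly_Pp poly_0_coeff_0[symmetric])
  then have cne: "c \<noteq> 0" by auto
  define \<theta> where "\<theta> = Arg c / m"
  have zm: "cis \<theta> ^ m = c"
  proof -
    have "cis \<theta> ^ m = cis (real m * \<theta>)" by (rule Complex.DeMoivre)
    also have "real m * \<theta> = Arg c" using m0 by (simp add: \<theta>_def)
    also have "cis (Arg c) = c" using cne c1 by (simp add: cis_Arg sgn_div_norm)
    finally show ?thesis .
  qed
  have "(\<Sum>k<m. poly (Pp p) (cis (2 * pi / m) ^ k * cis \<theta>)) = of_nat m * (c + 1 * c)"
    using visser_sum[OF m0, of "Pp p" "cis \<theta>"] degree_Pp[of p] coeff_Pp[of p] zm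
    unfolding m_def c_def by simp
  then have "cmod (\<Sum>k<m. poly (Pp p) (cis (2 * pi / m) ^ k * cis \<theta>)) = 2 * m"
    using c1 by (simp add: norm_mult)
  moreover have "cmod (\<Sum>k<m. poly (Pp p) (cis (2 * pi / m) ^ k * cis \<theta>)) < (\<Sum>k<m. 2)"
  proof -
    have "cmod (\<Sum>k<m. poly (Pp p) (cis (2 * pi / m) ^ k * cis \<theta>)) \<le> (\<Sum>k<m. cmod (poly (Pp p) (cis (2 * pi / m) ^ k * cis \<theta>)))"
      by (rule norm_sum)
    also have "\<dots> < (\<Sum>k<m. 2)"
    proof (rule sum_strict_mono)
      fix k assume "k \<in> {..<m}"
      have "cis (2 * pi / m) ^ k * cis \<theta> = cis (real k * (2 * pi / m) + \<theta>)"
        by (simp add: Complex.DeMoivre cis_mult)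
      then show "cmod (poly (Pp p) (cis (2 * pi / m) ^ k * cis \<theta>)) < 2"
        by (simp add: poly_Pp lt)
    qed (use m0 in auto)
    finally show ?thesis .
  qed
  ultimately show False by simp
qed

lemma circP_root: "x \<in> set p \<Longrightarrow> circP p (cis x) = 0"
  by (induction p) auto

lemma unity_poly:
  assumes "m > 0"
  shows "\<exists>p. length p = m \<and> (\<forall>t. cmod (circP p (cis t)) \<le> 2)"
proof -
  define p where "p = map (\<lambda>k. 2 * pi * real k / real m) [0..<m]"
  have lp: "length p = m" by (simp add: p_def)
  define D where "D = Pp p - (monom 1 m - 1)"
  have "degree D \<le> m - 1"
  proof (rule degree_le, intro allI impI)
    fix i assume i: "m - 1 < i"
    show "coeff D i = 0"
    proof (cases "i = m")
      case True
      then show ?thesis using coeff_Pp[of p] lp assms by (simp add: D_def coeff_monom)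
    next
      case False
      then have "i > m" using i by simp
      then show ?thesis using degree_Pp[of p] lp by (simp add: D_def coeff_monom coeff_eq_0)
    qed
  qed
  have D0: "D = 0"
  proof (rule ccontr)
    assume "D \<noteq> 0"
    then have c: "card {x. poly D x = 0} \<le> m - 1"
      using card_poly_roots_bound[of D] \<open>degree D \<le> m - 1\<close> by simp
    have sub: "(\<lambda>k. cis (2 * pi * real k / real m)) ` {..<m} \<subseteq> {x. poly D x = 0}"
    proof clarify
      fix k assume k: "k < m"
      have "2 * pi * real k / real m \<in> set p" using k by (simp add: p_def)
      then have "poly (Pp p) (cis (2 * pi * real k / real m)) = 0"
        by (simp add: poly_Pp circP_root)
      moreover have "cis (2 * pi * real k / real m) ^ m = 1"
        using Complex.bij_betw_roots_unity[OF assms] k by (auto simp: bij_betw_def)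
      ultimately show "poly D (cis (2 * pi * real k / real m)) = 0"
        by (simp add: D_def poly_monom)
    qed
    have inj: "inj_on (\<lambda>k. cis (2 * pi * real k / real m)) {..<m}"
      using Complex.bij_betw_roots_unity[OF assms] by (auto simp: bij_betw_def)
    have "m = card ((\<lambda>k. cis (2 * pi * real k / real m)) ` {..<m})"
      using card_image[OF inj] by simp
    also have "\<dots> \<le> card {x. poly D x = 0}"
      by (rule card_mono[OF poly_roots_finite[OF \<open>D \<noteq> 0\<close>] sub])
    finally show False using c assms by simp
  qed
  have "\<forall>t. cmod (circP p (cis t)) \<le> 2"
  proof
    fix t
    have "poly D (cis t) = 0" using D0 by simp
    then have "circP p (cis t) = cis t ^ m - 1" by (simp add: D_def poly_Pp poly_monom)
    then show "cmod (circP p (cis t)) \<le> 2"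
      using norm_triangle_ineq4[of "cis t ^ m" 1] by (simp add: norm_power)
  qed
  then show ?thesis using lp by blast
qed




abbreviation g :: "real list \<Rightarrow> real \<Rightarrow> real" where
  "g p t \<equiv> cmod (circP p (cis t))"

lemma g_cont: "continuous_on UNIV (g p)"
  using circP_cont[of p] by (intro continuous_intros) auto

lemma S_sets: "{t\<in>{0..<2*pi}. h \<le> g p t} \<in> sets lborel"
proof -
  have "closed {t. h \<le> g p t}" by (rule closed_Collect_le) (auto intro: g_cont continuous_intros)
  then have "{t. h \<le> g p t} \<in> sets lborel" by simp
  then have "{0..<2*pi} \<inter> {t. h \<le> g p t} \<in> sets lborel" by auto
  also have "{0..<2*pi} \<inter> {t. h \<le> g p t} = {t\<in>{0..<2*pi}. h \<le> g p t}" by auto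
  finally show ?thesis .
qed

lemma Icc_fm: "{0..2*pi} \<in> fmeasurable lborel"
  using fmeasurable_cbox[of "0::real" "2*pi"] by simp

lemma sub_fm: "A \<in> sets lborel \<Longrightarrow> A \<subseteq> {0..2*pi} \<Longrightarrow> A \<in> fmeasurable lborel"
  using Icc_fm by (rule fmeasurableI2)

lemma sub_le: "A \<in> sets lborel \<Longrightarrow> A \<subseteq> {0..2*pi} \<Longrightarrow> measure lborel A \<le> 2*pi"
  using measure_mono_fmeasurable[OF _ _ Icc_fm, of A] by simp

lemma levelmes_bounds: "0 \<le> levelmes p h" "levelmes p h \<le> 2*pi"
proof -
  have "{t\<in>{0..<2*pi}. h \<le> g p t} \<subseteq> {0..2*pi}" by auto
  then show "0 \<le> levelmes p h" "levelmes p h \<le> 2*pi"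
    unfolding levelmes_def using sub_le[OF S_sets] by auto
qed

lemma levelmes_strict:
  assumes "length p \<ge> 1"
  shows "measure lborel {t\<in>{0..<2*pi}. h < g p t} = levelmes p h"
proof -
  have "{t\<in>{0..<2*pi}. h < g p t} = {t\<in>{0..<2*pi}. h \<le> g p t} - {t\<in>{0..<2*pi}. g p t = h}"
    by auto
  moreover have "{t\<in>{0..<2*pi}. g p t = h} \<in> null_sets lborel"
    by (rule finite_imp_null_set_lborel[OF level_finite[OF assms]])
  ultimately show ?thesis unfolding levelmes_def using measure_Diff_null_set[OF S_sets] by simp
qed

lemma delta_le:
  assumes "length p = m"
  shows "delta m h \<le> levelmes p h"
  unfolding delta_def
  by (rule cInf_lower) (use assms levelmes_bounds in \<open>auto intro: bdd_belowI[where m=0]\<close>)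

lemma delta_ge:
  assumes "\<And>p. length p = m \<Longrightarrow> c \<le> levelmes p h"
  shows "c \<le> delta m h"
  unfolding delta_def
proof (rule cInf_greatest)
  show "{levelmes p h |p. length p = m} \<noteq> {}" using length_replicate[of m 0] by blast
qed (use assms in auto)

definition red :: "real \<Rightarrow> real" where
  "red x = x - 2 * pi * of_int \<lfloor>x / (2*pi)\<rfloor>"

lemma cis_red: "cis (red x) = cis x"
proof -
  have "cis (red x) = cis x / cis (2 * pi * of_int \<lfloor>x / (2*pi)\<rfloor>)"
    unfolding red_def by (rule cis_divide[symmetric])
  also have "cis (2 * pi * of_int \<lfloor>x / (2*pi)\<rfloor>) = 1" by (intro cis_multiple_2pi) auto
  finally show ?thesis by simp
qed

lemma red_range: "0 \<le> red x" "red x < 2 * pi"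
proof -
  define y where "y = x / (2*pi)"
  have x: "x = 2*pi*y" unfolding y_def by simp
  have "real_of_int \<lfloor>y\<rfloor> \<le> y" "y < real_of_int \<lfloor>y\<rfloor> + 1" by linarith+
  then have "2 * pi * real_of_int \<lfloor>y\<rfloor> \<le> 2 * pi * y" "2 * pi * y < 2 * pi * (real_of_int \<lfloor>y\<rfloor> + 1)"
    by (simp_all add: mult_left_mono)
  then show "0 \<le> red x" "red x < 2 * pi" unfolding red_def y_def[symmetric] using x
    by (simp_all add: algebra_simps)
qed

lemma circP_red: "circP (map red p) z = circP p z"
  by (induction p) (auto simp: cis_red)

lemma levelmes_red: "levelmes (map red p) h = levelmes p h"
  unfolding levelmes_def circP_red ..

lemma BW:
  fixes s :: "nat \<Rightarrow> real list"
  shows "(\<forall>n. length (s n) = m \<and> set (s n) \<subseteq> {0..2*pi}) \<Longrightarrow>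
   \<exists>r q. strict_mono r \<and> length q = m \<and> (\<forall>i<m. (\<lambda>n. s (r n) ! i) \<longlonglongrightarrow> q ! i)"
proof (induction m arbitrary: s)
  case 0
  have "strict_mono (\<lambda>n::nat. n) \<and> length ([]::real list) = 0 \<and> (\<forall>i<0. (\<lambda>n. s n ! i) \<longlonglongrightarrow> ([]::real list) ! i)"
    by (simp add: strict_mono_def)
  then show ?case by blast
next
  case (Suc m)
  have ne: "s n \<noteq> []" for n using Suc.prems by (metis list.size(3) nat.distinct(1))
  have hdin: "\<forall>n. hd (s n) \<in> {0..2*pi}" using Suc.prems ne hd_in_set by blast
  obtain l r1 where r1: "strict_mono r1" "((\<lambda>n. hd (s n)) \<circ> r1) \<longlonglongrightarrow> l"
    using seq_compactE[OF compact_imp_seq_compact[OF compact_Icc] hdin] by blast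
  have "\<forall>n. length (tl (s (r1 n))) = m \<and> set (tl (s (r1 n))) \<subseteq> {0..2*pi}"
  proof
    fix n
    have "set (tl (s (r1 n))) \<subseteq> set (s (r1 n))" by (cases "s (r1 n)") auto
    then show "length (tl (s (r1 n))) = m \<and> set (tl (s (r1 n))) \<subseteq> {0..2*pi}"
      using Suc.prems by auto
  qed
  from Suc.IH[OF this] obtain r2 q' where r2: "strict_mono r2" "length q' = m"
    "\<forall>i<m. (\<lambda>n. tl (s (r1 (r2 n))) ! i) \<longlonglongrightarrow> q' ! i" by blast
  show ?case
  proof (intro exI[of _ "r1 \<circ> r2"] exI[of _ "l # q'"] conjI allI impI)
    show "strict_mono (r1 \<circ> r2)" using r1 r2 by (simp add: strict_mono_o)
    show "length (l # q') = Suc m" using r2 by simp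
    fix i assume i: "i < Suc m"
    show "(\<lambda>n. s ((r1 \<circ> r2) n) ! i) \<longlonglongrightarrow> (l # q') ! i"
    proof (cases i)
      case 0
      have "(((\<lambda>n. hd (s n)) \<circ> r1) \<circ> r2) \<longlonglongrightarrow> l" using LIMSEQ_subseq_LIMSEQ r1 r2 by blast
      moreover have "s ((r1 \<circ> r2) n) ! 0 = (((\<lambda>n. hd (s n)) \<circ> r1) \<circ> r2) n" for n
        using ne by (simp add: hd_conv_nth)
      ultimately show ?thesis using 0 by (simp add: comp_def)
    next
      case (Suc j)
      then have j: "j < m" using i by simp
      have "s ((r1 \<circ> r2) n) ! Suc j = tl (s (r1 (r2 n))) ! j" for n
        using Suc.prems j by (simp add: nth_tl)
      then show ?thesis using r2(3) j Suc by simp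
    qed
  qed
qed




lemma attain:
  assumes m1: "m \<ge> 1"
  shows "\<exists>p. length p = m \<and> levelmes p h = delta m h"
proof -
  define c where "c = delta m h"
  have "\<forall>n. \<exists>p. length p = m \<and> set p \<subseteq> {0..2*pi} \<and> levelmes p h < c + inverse (real (Suc n))"
  proof
    fix n
    obtain p0 where p0: "length p0 = m" "levelmes p0 h < c + inverse (real (Suc n))"
    proof (rule ccontr)
      assume na: "\<not> thesis"
      note ob = that
      have "c + inverse (real (Suc n)) \<le> levelmes p h" if lp: "length p = m" for p
      proof (rule ccontr)
        assume "\<not> c + inverse (real (Suc n)) \<le> levelmes p h"
        then have "levelmes p h < c + inverse (real (Suc n))" by simp
        then show False using ob[OF lp] na by blast
      qed
      then have "c + inverse (real (Suc n)) \<le> c" unfolding c_def by (rule delta_ge)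
      then show False by simp
    qed
    have "set (map red p0) \<subseteq> {0..2*pi}" using red_range by (auto intro: less_imp_le[OF red_range(2)])
    then show "\<exists>p. length p = m \<and> set p \<subseteq> {0..2*pi} \<and> levelmes p h < c + inverse (real (Suc n))"
      using p0 levelmes_red[of p0 h] by (intro exI[of _ "map red p0"]) auto
  qed
  then obtain s where s: "\<And>n. length (s n) = m \<and> set (s n) \<subseteq> {0..2*pi} \<and> levelmes (s n) h < c + inverse (real (Suc n))"
    by metis
  obtain r q where rq: "strict_mono r" "length q = m" "\<forall>i<m. (\<lambda>n. s (r n) ! i) \<longlonglongrightarrow> q ! i"
    using BW[of s m] s by blast
  define E where "E n = (\<Sum>i<m. cmod (cis (s (r n) ! i) - cis (q ! i)))" for n
  have "E \<longlonglongrightarrow> (\<Sum>i<m. cmod (cis (q ! i) - cis (q ! i)))"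
    unfolding E_def using rq(3) by (intro tendsto_intros) auto
  then have E0: "E \<longlonglongrightarrow> 0" by simp
  have key: "measure lborel {t\<in>{0..<2*pi}. h + e \<le> g q t} \<le> c" if e: "e > 0" for e
  proof -
    have "eventually (\<lambda>n. E n < e / 2 ^ m) sequentially"
      using E0 e by (intro order_tendstoD(2)) auto
    then obtain N where N: "\<And>n. n \<ge> N \<Longrightarrow> E n < e / 2 ^ m" by (auto simp: eventually_sequentially)
    show ?thesis
    proof (rule LIMSEQ_le_const)
      show "(\<lambda>n. c + inverse (real (Suc n))) \<longlonglongrightarrow> c"
        using tendsto_add[OF tendsto_const LIMSEQ_inverse_real_of_nat, of c] by simp
      show "\<exists>N. \<forall>n\<ge>N. measure lborel {t\<in>{0..<2*pi}. h + e \<le> g q t} \<le> c + inverse (real (Suc n))"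
      proof (intro exI allI impI)
        fix n assume n: "n \<ge> N"
        have sub: "{t\<in>{0..<2*pi}. h + e \<le> g q t} \<subseteq> {t\<in>{0..<2*pi}. h \<le> g (s (r n)) t}"
        proof
          fix t assume "t \<in> {t\<in>{0..<2*pi}. h + e \<le> g q t}"
          then have t: "0 \<le> t" "t < 2*pi" "h + e \<le> g q t" by auto
          have "\<bar>g (s (r n)) t - g q t\<bar> \<le> cmod (circP (s (r n)) (cis t) - circP q (cis t))"
            by (rule norm_triangle_ineq3)
          also have "\<dots> \<le> 2 ^ m * E n"
            using circP_lip[of "cis t" "s (r n)" q] s[of "r n"] rq(2) unfolding E_def by simp
          also have "\<dots> < e" using N[OF n] by (simp add: field_simps)
          finally show "t \<in> {t\<in>{0..<2*pi}. h \<le> g (s (r n)) t}" using t by auto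
        qed
        have "measure lborel {t\<in>{0..<2*pi}. h + e \<le> g q t} \<le> levelmes (s (r n)) h"
          unfolding levelmes_def
          by (rule measure_mono_fmeasurable[OF sub S_sets sub_fm[OF S_sets]]) auto
        also have "\<dots> < c + inverse (real (Suc (r n)))" using s by blast
        also have "\<dots> \<le> c + inverse (real (Suc n))"
          using seq_suble[OF rq(1), of n] by (simp add: le_imp_inverse_le)
        finally show "measure lborel {t\<in>{0..<2*pi}. h + e \<le> g q t} \<le> c + inverse (real (Suc n))"
          by simp
      qed
    qed
  qed
  define A where "A k = {t\<in>{0..<2*pi}. h + inverse (real (Suc k)) \<le> g q t}" for k
  have U: "(\<Union>k. A k) = {t\<in>{0..<2*pi}. h < g q t}"
  proof
    show "(\<Union>k. A k) \<subseteq> {t\<in>{0..<2*pi}. h < g q t}"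
    proof
      fix t assume "t \<in> (\<Union>k. A k)"
      then obtain k where tk: "t \<in> A k" by blast
      have pos: "inverse (real (Suc k)) > 0" by simp
      have a: "t \<in> {0..<2*pi}" and b: "h + inverse (real (Suc k)) \<le> g q t"
        using tk unfolding A_def by blast+
      have "h < g q t" using b pos by linarith
      then show "t \<in> {t\<in>{0..<2*pi}. h < g q t}" using a by blast
    qed
    show "{t\<in>{0..<2*pi}. h < g q t} \<subseteq> (\<Union>k. A k)"
    proof
      fix t assume "t \<in> {t\<in>{0..<2*pi}. h < g q t}"
      then have t: "0 \<le> t" "t < 2*pi" "h < g q t" by auto
      then obtain k where k: "k > 0" "inverse (real k) < g q t - h"
        using ex_inverse_of_nat_less[of "g q t - h"] by auto
      then have "inverse (real (Suc k)) \<le> inverse (real k)" by (simp add: le_imp_inverse_le)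
      then have "h + inverse (real (Suc k)) \<le> g q t" using k by linarith
      then have "t \<in> A k" using t unfolding A_def by auto
      then show "t \<in> (\<Union>k. A k)" by blast
    qed
  qed
  have lim: "(\<lambda>k. measure lborel (A k)) \<longlonglongrightarrow> measure lborel (\<Union>k. A k)"
  proof (rule Lim_measure_incseq)
    show "range A \<subseteq> sets lborel" unfolding A_def using S_sets by blast
    show "incseq A"
    proof (rule incseq_SucI)
      fix k
      have "inverse (real (Suc (Suc k))) \<le> inverse (real (Suc k))" by (simp add: le_imp_inverse_le)
      note ineq = this
      show "A k \<subseteq> A (Suc k)"
      proof
        fix t assume "t \<in> A k"
        then have a: "0 \<le> t" "t < 2*pi" "h + inverse (real (Suc k)) \<le> g q t" unfolding A_def by auto
        then have "h + inverse (real (Suc (Suc k))) \<le> g q t" using ineq by linarith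
        then show "t \<in> A (Suc k)" using a unfolding A_def by auto
      qed
    qed
    have "emeasure lborel (\<Union>k. A k) \<le> emeasure lborel {0..2*pi}"
      by (rule emeasure_mono) (auto simp: U)
    then show "emeasure lborel (\<Union>k. A k) \<noteq> \<infinity>" by (auto simp: top_unique)
  qed
  have "measure lborel (\<Union>k. A k) \<le> c"
  proof (rule LIMSEQ_le_const2[OF lim], intro exI allI impI)
    fix k :: nat
    show "measure lborel (A k) \<le> c" unfolding A_def by (rule key) simp
  qed
  then have "levelmes q h \<le> c" using levelmes_strict[of q h] rq(2) m1 U by simp
  moreover have "c \<le> levelmes q h" unfolding c_def by (rule delta_le[OF rq(2)])
  ultimately show ?thesis using rq(2) c_def by (intro exI[of _ q]) auto
qed




lemma delta0: "delta m 0 = 2 * pi"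
proof -
  have l: "levelmes p 0 = 2 * pi" for p
  proof -
    have "{t\<in>{0..<2*pi}. 0 \<le> g p t} = {0..<2*pi}" by auto
    then show ?thesis unfolding levelmes_def by simp
  qed
  show ?thesis
  proof (rule antisym)
    show "delta m 0 \<le> 2 * pi" using delta_le[of "replicate m 0" m 0] l by simp
    show "2 * pi \<le> delta m 0" by (rule delta_ge) (simp add: l)
  qed
qed

lemma delta2:
  assumes "m \<ge> 1"
  shows "delta m 2 = 0"
proof -
  obtain p where p: "length p = m" "\<And>t. g p t \<le> 2" using unity_poly[of m] assms by auto
  have "{t\<in>{0..<2*pi}. 2 \<le> g p t} = {t\<in>{0..<2*pi}. g p t = 2}"
    using p(2) by (auto intro: antisym)
  moreover have "finite {t\<in>{0..<2*pi}. g p t = 2}" using level_finite[of p 2] p assms by simp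
  ultimately have null: "{t\<in>{0..<2*pi}. 2 \<le> g p t} \<in> null_sets lborel"
    using finite_imp_null_set_lborel by simp
  have "levelmes p 2 = 0" unfolding levelmes_def measure_def using null_setsD1[OF null] by simp
  then have "delta m 2 \<le> 0" using delta_le[OF p(1), of 2] by simp
  moreover have "0 \<le> delta m 2" by (rule delta_ge) (simp add: levelmes_bounds)
  ultimately show ?thesis by simp
qed

lemma strict:
  assumes m1: "m \<ge> 1" and h: "0 \<le> h1" "h1 < h2" "h2 \<le> 2"
  shows "delta m h2 < delta m h1"
proof -
  obtain p where p: "length p = m" "levelmes p h1 = delta m h1" using attain[OF m1] by blast
  have lp: "length p \<ge> 1" using p m1 by simp
  define v where "v = (h1 + h2) / 2"
  have v: "h1 < v" "v < h2" "v < 2" using h by (auto simp: v_def)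
  obtain t0 where t0: "2 \<le> g p t0" using visser[OF lp] by blast
  define b where "b = red t0"
  have b: "0 \<le> b" "b < 2*pi" "g p b = g p t0" unfolding b_def using red_range cis_red by auto
  define a where "a = red (p ! 0)"
  have "p ! 0 \<in> set p" using lp by (simp add: Suc_le_eq)
  then have "circP p (cis (p!0)) = 0" by (rule circP_root)
  then have a: "0 \<le> a" "a < 2*pi" "g p a = 0" unfolding a_def using red_range cis_red by auto
  have cont: "continuous_on S (g p)" for S using g_cont continuous_on_subset by blast
  obtain t1 where t1: "0 \<le> t1" "t1 < 2*pi" "g p t1 = v"
  proof (cases "a \<le> b")
    case True
    then obtain x where x: "a \<le> x" "x \<le> b" "g p x = v"
      using IVT'[of "g p" a v b] a b t0 v h cont by force
    have "0 \<le> x" "x < 2*pi" using x a b by linarith+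
    then show ?thesis using that[of x] x by simp
  next
    case False
    then obtain x where x: "b \<le> x" "x \<le> a" "g p x = v"
      using IVT2'[of "g p" a v b] a b t0 v h cont by force
    have "0 \<le> x" "x < 2*pi" using x a b by linarith+
    then show ?thesis using that[of x] x by simp
  qed
  have "open ({t. h1 < g p t} \<inter> {t. g p t < h2})"
    by (intro open_Int open_Collect_less g_cont continuous_intros)
  moreover have "t1 \<in> {t. h1 < g p t} \<inter> {t. g p t < h2}" using t1 v by auto
  ultimately obtain e where e: "e > 0" "ball t1 e \<subseteq> {t. h1 < g p t} \<inter> {t. g p t < h2}"
    by (meson openE)
  define d where "d = min e (2*pi - t1)"
  have d: "d > 0" using e t1 by (simp add: d_def)
  define A1 where "A1 = {t\<in>{0..<2*pi}. h1 \<le> g p t}"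
  define A2 where "A2 = {t\<in>{0..<2*pi}. h2 \<le> g p t}"
  have A1s: "A1 \<in> sets lborel" "A2 \<in> sets lborel" unfolding A1_def A2_def by (rule S_sets)+
  have A21: "A2 \<subseteq> A1" unfolding A1_def A2_def using h by auto
  have fin: "emeasure lborel A1 \<noteq> \<infinity>"
  proof -
    have "A1 \<in> fmeasurable lborel" unfolding A1_def by (rule sub_fm[OF S_sets]) auto
    then show ?thesis by (simp add: fmeasurable_def less_top[symmetric])
  qed
  have sub: "{t1<..<t1+d} \<subseteq> A1 - A2"
  proof
    fix t assume t: "t \<in> {t1<..<t1+d}"
    then have "dist t t1 < e" using d_def by (auto simp: dist_real_def)
    then have "t \<in> ball t1 e" by (simp add: dist_commute)
    then have "h1 < g p t" "g p t < h2" using e by auto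
    moreover have "0 \<le> t" "t < 2*pi" using t t1 d_def by auto
    ultimately show "t \<in> A1 - A2" unfolding A1_def A2_def by auto
  qed
  have "d = measure lborel {t1<..<t1+d}" using d by simp
  also have "\<dots> \<le> measure lborel (A1 - A2)"
  proof (rule measure_mono_fmeasurable[OF sub])
    show "{t1<..<t1+d} \<in> sets lborel" by simp
    show "A1 - A2 \<in> fmeasurable lborel"
      using A1s unfolding A1_def by (intro sub_fm) auto
  qed
  also have "\<dots> = measure lborel A1 - measure lborel A2"
    by (rule measure_Diff[OF fin A1s(1) A1s(2) A21])
  finally have "levelmes p h2 < levelmes p h1"
    using d unfolding levelmes_def A1_def A2_def by simp
  then show ?thesis using p delta_le[OF p(1), of h2] by simp
qed

theorem lemma2:
  fixes m :: nat
  assumes "m \<ge> 1"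
  shows "(\<forall>h\<in>{0..2}. \<exists>\<phi>. length \<phi> = m \<and> levelmes \<phi> h = delta m h)
       \<and> delta m 0 = 2 * pi \<and> delta m 2 = 0
       \<and> (\<forall>h1\<in>{0..2}. \<forall>h2\<in>{0..2}. h1 < h2 \<longrightarrow> delta m h2 < delta m h1)"
  using attain[OF assms] delta0 delta2[OF assms] strict[OF assms] by auto


end
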